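(* Let $A\in\mathbb R^{n\times n}$ be symmetric ($n\ge3$) and let $z\in\mathbb C\setminus\mathbb R$ with $|z|\le10$. Suppose $$\|R_{A,12}(z)-m_0(z)\mathbf I_2\|\le\delta,$$ where $0\le\delta\le\frac12\inf\{|m_0(w)|:w\in\mathbb C\setminus[-2,2],\,|w|\le10\}$. Then there is an absolute constant $C>0$ such that for $k=1,2$, $$\Big|\mathbf e_k^\top R_A(z)\mathbf 1-m_0(z)\big(1-a_k^\top R_A^{(12)}(z)\mathbf 1_{n-2}\big)\Big|\le C\delta\big(1+\|R_A(z)\mathbf 1\|_\infty\big).$$
   Context: $R_A(z)=(A-z\mathbf I)^{-1}$; $R_{A,12}(z)\in\mathbb C^{2\times2}$ is the upper-left $2\times2$ submatrix of $R_A(z)$; $R_A^{(12)}(z)\in\mathbb C^{(n-2)\times(n-2)}$ is the resolvent of the $(n-2)\times(n-2)$ submatrix of $A$ obtained by deleting its first two rows and columns; $a_k^\top\in\mathbb R^{1\times(n-2)}$ is the $k$-th row of $A$ with its first two entries removed; $\mathbf 1,\mathbf 1_{n-2}$ are all-ones vectors; $\|v\|_\infty=\max_i|v_i|$ and $\|\cdot\|$ is the spectral norm. $m_0(z)=\frac{-z+\sqrt{z^2-4}}2$ is the Stieltjes transform of the semicircle law, defined for $z\notin[-2,2]$ with branch cut on $[-2,2]$ and $\sqrt{z^2-4}\sim z$ as $|z|\to\infty$. *)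

theory Defs
  imports "HOL-Analysis.Analysis" "Jordan_Normal_Form.Matrix"
begin

(* Matrices are Jordan_Normal_Form matrices; indices are 0-based, so the
   paper's rows/columns 1,2 are our indices 0,1. *)

(* Stieltjes transform of the semicircle law:
   m0 z = (-z + sqrt(z^2-4))/2 where sqrt(z^2-4) is the branch analytic on
   C \ [-2,2] with sqrt(z^2-4) ~ z at infinity; this branch is
   z * csqrt(1 - 4/z^2) (principal csqrt). *)
definition sqrt_branch :: "complex \<Rightarrow> complex" where
  "sqrt_branch z = z * csqrt (1 - 4 / z\<^sup>2)"

definition m0 :: "complex \<Rightarrow> complex" where
  "m0 z = (- z + sqrt_branch z) / 2"

definition ones_vec :: "nat \<Rightarrow> complex vec" where
  "ones_vec n = vec n (\<lambda>_. 1)"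

definition shifted :: "real mat \<Rightarrow> complex \<Rightarrow> complex mat" where
  "shifted A z = map_mat complex_of_real A - z \<cdot>\<^sub>m 1\<^sub>m (dim_row A)"

definition resolvent :: "real mat \<Rightarrow> complex \<Rightarrow> complex mat" where
  "resolvent A z = (THE B. B \<in> carrier_mat (dim_row A) (dim_row A) \<and>
       inverts_mat B (shifted A z) \<and> inverts_mat (shifted A z) B)"

definition minor12 :: "real mat \<Rightarrow> real mat" where
  "minor12 A = mat (dim_row A - 2) (dim_col A - 2) (\<lambda>(i, j). A $$ (i + 2, j + 2))"

definition block12 :: "complex mat \<Rightarrow> complex mat" where
  "block12 M = mat 2 2 (\<lambda>(i, j). M $$ (i, j))"

definition row_rest :: "real mat \<Rightarrow> nat \<Rightarrow> complex vec" where
  "row_rest A k = vec (dim_col A - 2) (\<lambda>j. complex_of_real (A $$ (k, j + 2)))"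

definition vnorm2 :: "complex vec \<Rightarrow> real" where
  "vnorm2 v = sqrt (\<Sum>i<dim_vec v. (cmod (v $ i))\<^sup>2)"

definition vnorm_inf :: "complex vec \<Rightarrow> real" where
  "vnorm_inf v = Max (insert 0 ((\<lambda>i. cmod (v $ i)) ` {..<dim_vec v}))"

definition spec_norm :: "complex mat \<Rightarrow> real" where
  "spec_norm M = Sup {vnorm2 (M *\<^sub>v v) | v. v \<in> carrier_vec (dim_col M) \<and> vnorm2 v = 1}"

end

theory Submission
  imports Defs "Jordan_Normal_Form.Determinant"
begin


lemma mv_index: "A \<in> carrier_mat n m \<Longrightarrow> v \<in> carrier_vec m \<Longrightarrow> i < n \<Longrightarrow>
  (A *\<^sub>v v) $ i = (\<Sum>j<m. A $$ (i,j) * v $ j)"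
  unfolding mult_mat_vec_def scalar_prod_def by (auto simp: atLeast0LessThan)

lemma shifted_carrier: "M \<in> carrier_mat n n \<Longrightarrow> shifted M z \<in> carrier_mat n n"
  unfolding shifted_def by auto

lemma shifted_index: "M \<in> carrier_mat n n \<Longrightarrow> i < n \<Longrightarrow> j < n \<Longrightarrow>
   shifted M z $$ (i,j) = complex_of_real (M $$ (i,j)) - (if i = j then z else 0)"
  unfolding shifted_def by auto

lemma shifted_inj:
  assumes M: "M \<in> carrier_mat n n" and sym: "transpose_mat M = M" and z: "Im z \<noteq> 0"
    and v: "v \<in> carrier_vec n" and Sv: "shifted M z *\<^sub>v v = 0\<^sub>v n"
  shows "v = 0\<^sub>v n"
proof -
  have symi: "M $$ (i,j) = M $$ (j,i)" if "i < n" "j < n" for i j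
    using arg_cong[OF sym, of "\<lambda>X. X $$ (j,i)"] that M by auto
  have eq: "(\<Sum>j<n. complex_of_real (M $$ (i,j)) * v $ j) = z * v $ i" if i: "i < n" for i
  proof -
    have "(shifted M z *\<^sub>v v) $ i = 0" using Sv i by simp
    moreover have "(shifted M z *\<^sub>v v) $ i = (\<Sum>j<n. shifted M z $$ (i,j) * v $ j)"
      by (rule mv_index[OF shifted_carrier[OF M] v i])
    moreover have "(\<Sum>j<n. shifted M z $$ (i,j) * v $ j) = (\<Sum>j<n. complex_of_real (M $$ (i,j)) * v $ j) - z * v $ i"
    proof -
      have "(\<Sum>j<n. shifted M z $$ (i,j) * v $ j) = (\<Sum>j<n. complex_of_real (M $$ (i,j)) * v $ j - (if i = j then z * v $ i else 0))"
        using i by (intro sum.cong) (auto simp: shifted_index[OF M] left_diff_distrib)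
      also have "\<dots> = (\<Sum>j<n. complex_of_real (M $$ (i,j)) * v $ j) - z * v $ i"
        using i by (simp add: sum_subtractf)
      finally show ?thesis .
    qed
    ultimately show ?thesis by simp
  qed
  define s where "s = (\<Sum>i<n. cnj (v $ i) * (\<Sum>j<n. complex_of_real (M $$ (i,j)) * v $ j))"
  have "cnj s = (\<Sum>i<n. v $ i * (\<Sum>j<n. complex_of_real (M $$ (i,j)) * cnj (v $ j)))"
    unfolding s_def by simp
  also have "\<dots> = (\<Sum>i<n. \<Sum>j<n. v $ i * complex_of_real (M $$ (i,j)) * cnj (v $ j))"
    by (simp add: sum_distrib_left mult.assoc)
  also have "\<dots> = (\<Sum>j<n. \<Sum>i<n. v $ i * complex_of_real (M $$ (i,j)) * cnj (v $ j))"
    by (rule sum.swap)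
  also have "\<dots> = s" unfolding s_def sum_distrib_left
    by (intro sum.cong refl) (auto simp: symi mult.commute mult.left_commute)
  finally have cs: "cnj s = s" .
  have s2: "s = z * complex_of_real (\<Sum>i<n. (cmod (v $ i))\<^sup>2)"
  proof -
    have "s = (\<Sum>i<n. cnj (v $ i) * (z * v $ i))" unfolding s_def by (intro sum.cong) (auto simp: eq)
    also have "\<dots> = (\<Sum>i<n. z * complex_of_real ((cmod (v $ i))\<^sup>2))"
    proof (intro sum.cong refl)
      fix i
      have "cnj (v $ i) * (z * v $ i) = z * (v $ i * cnj (v $ i))" by (simp add: algebra_simps)
      then show "cnj (v $ i) * (z * v $ i) = z * complex_of_real ((cmod (v $ i))\<^sup>2)"
        by (simp only: complex_norm_square)
    qed
    finally show ?thesis by (simp add: sum_distrib_left)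
  qed
  have "Im (cnj s) = Im s" using cs by simp
  then have "Im s = 0" by simp
  then have "Im z * (\<Sum>i<n. (cmod (v $ i))\<^sup>2) = 0" using s2 by simp
  then have "(\<Sum>i<n. (cmod (v $ i))\<^sup>2) = 0" using z by simp
  then have "\<forall>i\<in>{..<n}. (cmod (v $ i))\<^sup>2 = 0"
    using sum_nonneg_eq_0_iff[of "{..<n}" "\<lambda>i. (cmod (v $ i))\<^sup>2"] by simp
  then show ?thesis using v by (intro eq_vecI) auto
qed

lemma resolvent_props:
  assumes M: "M \<in> carrier_mat n n" and sym: "transpose_mat M = M" and z: "Im z \<noteq> 0"
  shows "resolvent M z \<in> carrier_mat n n" "resolvent M z * shifted M z = 1\<^sub>m n"
    "shifted M z * resolvent M z = 1\<^sub>m n"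
proof -
  let ?S = "shifted M z"
  have S: "?S \<in> carrier_mat n n" by (rule shifted_carrier[OF M])
  have "det ?S \<noteq> 0"
    using det_0_iff_vec_prod_zero_field[OF S] shifted_inj[OF M sym z] by blast
  from det_non_zero_imp_unit[OF S this, of "()"]
  obtain B where B: "B \<in> carrier_mat n n" "B * ?S = 1\<^sub>m n" "?S * B = 1\<^sub>m n"
    unfolding Units_def ring_mat_simps by auto
  have P: "B \<in> carrier_mat (dim_row M) (dim_row M) \<and> inverts_mat B ?S \<and> inverts_mat ?S B"
    using B M S unfolding inverts_mat_def by auto
  have U: "C = B" if "C \<in> carrier_mat (dim_row M) (dim_row M) \<and> inverts_mat C ?S \<and> inverts_mat ?S C" for C
  proof -
    have C: "C \<in> carrier_mat n n" "C * ?S = 1\<^sub>m n" using that M unfolding inverts_mat_def by auto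
    have "C = C * (?S * B)" using C B by simp
    also have "\<dots> = (C * ?S) * B" by (rule assoc_mult_mat[symmetric, OF C(1) S B(1)])
    also have "\<dots> = B" unfolding C(2) using B(1) by (rule left_mult_one_mat)
    finally show ?thesis .
  qed
  have "resolvent M z = B" unfolding resolvent_def using P U by (rule the_equality)
  then show "resolvent M z \<in> carrier_mat n n" "resolvent M z * shifted M z = 1\<^sub>m n"
    "shifted M z * resolvent M z = 1\<^sub>m n" using B by auto
qed

lemma sum_split2: "(\<Sum>j<Suc (Suc m). f j) = f 0 + f 1 + (\<Sum>j<m. f (j+2))"
  by (subst sum.lessThan_Suc_shift, subst sum.lessThan_Suc_shift) (simp add: numeral_2_eq_2 add.assoc)

lemma minor12_props:
  assumes A: "A \<in> carrier_mat n n" and sym: "transpose_mat A = A"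
  shows "minor12 A \<in> carrier_mat (n-2) (n-2)" "transpose_mat (minor12 A) = minor12 A"
proof -
  show "minor12 A \<in> carrier_mat (n-2) (n-2)" using A unfolding minor12_def by auto
  have symi: "A $$ (i,j) = A $$ (j,i)" if "i < n" "j < n" for i j
    using arg_cong[OF sym, of "\<lambda>X. X $$ (j,i)"] that A by auto
  show "transpose_mat (minor12 A) = minor12 A"
    using A unfolding minor12_def by (intro eq_matI) (auto simp: symi)
qed

lemma key_identity:
  assumes A: "A \<in> carrier_mat n n" and sym: "transpose_mat A = A" and z: "Im z \<noteq> 0"
    and n: "n \<ge> 3" and k: "k < 2"
  shows "(resolvent A z *\<^sub>v ones_vec n) $ k =
     resolvent A z $$ (k,0) * (1 - row_rest A 0 \<bullet> (resolvent (minor12 A) z *\<^sub>v ones_vec (n - 2)))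
   + resolvent A z $$ (k,1) * (1 - row_rest A 1 \<bullet> (resolvent (minor12 A) z *\<^sub>v ones_vec (n - 2)))"
proof -
  define m where "m = n - 2"
  have nm: "n = Suc (Suc m)" using n unfolding m_def by auto
  define R where "R = resolvent A z"
  define G where "G = resolvent (minor12 A) z"
  define S where "S = shifted A z"
  define S' where "S' = shifted (minor12 A) z"
  note Mp = minor12_props[OF A sym]
  have R: "R \<in> carrier_mat n n" "R * S = 1\<^sub>m n" unfolding R_def S_def using resolvent_props[OF A sym z] by auto
  have G: "G \<in> carrier_mat m m" "S' * G = 1\<^sub>m m" unfolding G_def S'_def m_def
    using resolvent_props[OF Mp z] by auto
  have S: "S \<in> carrier_mat n n" unfolding S_def by (rule shifted_carrier[OF A])
  have S': "S' \<in> carrier_mat m m" unfolding S'_def m_def by (rule shifted_carrier[OF Mp(1)])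
  define g where "g = G *\<^sub>v ones_vec m"
  have g: "g \<in> carrier_vec m" unfolding g_def using G by (auto simp: ones_vec_def)
  define v where "v = vec n (\<lambda>i. if i < 2 then 0 else g $ (i - 2))"
  have v: "v \<in> carrier_vec n" unfolding v_def by auto
  define u where "u = (\<lambda>i. 1 - row_rest A i \<bullet> g)"
  have Sv_top: "(S *\<^sub>v v) $ i = row_rest A i \<bullet> g" if i: "i < 2" for i
  proof -
    have "(S *\<^sub>v v) $ i = (\<Sum>j<n. S $$ (i,j) * v $ j)" using i n by (intro mv_index[OF S v]) auto
    also have "\<dots> = (\<Sum>j<m. S $$ (i,j+2) * v $ (j+2))" unfolding nm sum_split2 by (simp add: v_def nm)
    also have "\<dots> = (\<Sum>j<m. row_rest A i $ j * g $ j)"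
    proof (intro sum.cong refl)
      fix j assume "j \<in> {..<m}"
      then have j: "j < m" by simp
      have "j + 2 < n" "i < n" using j i nm by auto
      then have "S $$ (i,j+2) = complex_of_real (A $$ (i,j+2))" using i unfolding S_def
        by (simp add: shifted_index[OF A])
      moreover have "v $ (j+2) = g $ j" unfolding v_def using \<open>j + 2 < n\<close> by simp
      moreover have "row_rest A i $ j = complex_of_real (A $$ (i,j+2))" unfolding row_rest_def
        using A j m_def by simp
      ultimately show "S $$ (i,j+2) * v $ (j+2) = row_rest A i $ j * g $ j" by simp
    qed
    also have "\<dots> = row_rest A i \<bullet> g" using g A unfolding scalar_prod_def m_def
      by (simp add: atLeast0LessThan)
    finally show ?thesis .
  qed
  have Sv_bot: "(S *\<^sub>v v) $ (i+2) = 1" if i: "i < m" for i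
  proof -
    have "(S *\<^sub>v v) $ (i+2) = (\<Sum>j<n. S $$ (i+2,j) * v $ j)" using i nm by (intro mv_index[OF S v]) auto
    also have "\<dots> = (\<Sum>j<m. S $$ (i+2,j+2) * v $ (j+2))" unfolding nm sum_split2 by (simp add: v_def nm)
    also have "\<dots> = (\<Sum>j<m. S' $$ (i,j) * g $ j)"
    proof (intro sum.cong refl)
      fix j assume "j \<in> {..<m}"
      then have j: "j < m" by simp
      have "j + 2 < n" "i + 2 < n" using j i nm by auto
      then have "S $$ (i+2,j+2) = complex_of_real (A $$ (i+2,j+2)) - (if i = j then z else 0)" unfolding S_def
        by (simp add: shifted_index[OF A])
      moreover have "S' $$ (i,j) = complex_of_real (minor12 A $$ (i,j)) - (if i = j then z else 0)"
        unfolding S'_def using i j m_def by (simp add: shifted_index[OF Mp(1)])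
      moreover have "minor12 A $$ (i,j) = A $$ (i+2,j+2)" unfolding minor12_def using A i j m_def by simp
      moreover have "v $ (j+2) = g $ j" unfolding v_def using \<open>j + 2 < n\<close> by simp
      ultimately show "S $$ (i+2,j+2) * v $ (j+2) = S' $$ (i,j) * g $ j" by simp
    qed
    also have "\<dots> = (S' *\<^sub>v g) $ i" using i by (intro mv_index[OF S' g, symmetric])
    also have "S' *\<^sub>v g = ones_vec m" unfolding g_def using S' G
      by (simp add: assoc_mult_mat_vec[symmetric, of _ m m _ m] ones_vec_def)
    finally show ?thesis using i by (simp add: ones_vec_def)
  qed
  define w where "w = ones_vec n - S *\<^sub>v v"
  have w: "w \<in> carrier_vec n" unfolding w_def using S v by (auto simp: ones_vec_def)
  have Rw: "R *\<^sub>v w = R *\<^sub>v ones_vec n - v"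
  proof -
    have "R *\<^sub>v w = R *\<^sub>v ones_vec n - R *\<^sub>v (S *\<^sub>v v)" unfolding w_def
      using R S v by (intro mult_minus_distrib_mat_vec) (auto simp: ones_vec_def)
    also have "R *\<^sub>v (S *\<^sub>v v) = v" using R S v by (simp add: assoc_mult_mat_vec[symmetric, of _ n n _ n])
    finally show ?thesis .
  qed
  have "(R *\<^sub>v ones_vec n) $ k = (R *\<^sub>v w) $ k"
    using Rw k nm R by (simp add: v_def)
  also have "\<dots> = (\<Sum>j<n. R $$ (k,j) * w $ j)" using k nm by (intro mv_index[OF R(1) w]) auto
  also have "\<dots> = R $$ (k,0) * u 0 + R $$ (k,1) * u 1"
  proof -
    have "w $ (j+2) = 0" if "j < m" for j using that nm S Sv_bot[OF that] unfolding w_def by (simp add: ones_vec_def)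
    moreover have "w $ i = u i" if "i < 2" for i using that nm S Sv_top[OF that] unfolding w_def u_def
      by (simp add: ones_vec_def)
    ultimately show ?thesis unfolding nm sum_split2 by simp
  qed
  finally show ?thesis unfolding R_def u_def g_def G_def m_def by simp
qed



lemma vnorm2_2: "v \<in> carrier_vec 2 \<Longrightarrow> vnorm2 v = norm (v $ 0, v $ 1)"
  unfolding vnorm2_def norm_Pair by (simp add: numeral_2_eq_2)

lemma mv2: "E \<in> carrier_mat 2 2 \<Longrightarrow> v \<in> carrier_vec 2 \<Longrightarrow>
   (E *\<^sub>v v) $ 0 = E $$ (0,0) * v $ 0 + E $$ (0,1) * v $ 1 \<and>
   (E *\<^sub>v v) $ 1 = E $$ (1,0) * v $ 0 + E $$ (1,1) * v $ 1"
proof -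
  assume E: "E \<in> carrier_mat 2 2" and v: "v \<in> carrier_vec 2"
  have "(E *\<^sub>v v) $ i = (\<Sum>j<2. E $$ (i,j) * v $ j)" if "i<2" for i by (rule mv_index[OF E v that])
  from this[of 0] this[of 1] show ?thesis by (simp add: numeral_2_eq_2)
qed

lemma spec2:
  assumes E: "E \<in> carrier_mat 2 2"
  shows "norm (E $$ (0,0) * c0 + E $$ (0,1) * c1, E $$ (1,0) * c0 + E $$ (1,1) * c1)
     \<le> spec_norm E * norm (c0, c1)"
proof -
  define Sset where "Sset = {vnorm2 (E *\<^sub>v v) | v. v \<in> carrier_vec (dim_col E) \<and> vnorm2 v = 1}"
  have dc: "dim_col E = 2" using E by auto
  define K where "K = cmod (E $$ (0,0)) + cmod (E $$ (0,1)) + cmod (E $$ (1,0)) + cmod (E $$ (1,1))"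
  have bdd: "bdd_above Sset"
  proof (rule bdd_aboveI[of _ K])
    fix x assume "x \<in> Sset"
    then obtain v where v: "v \<in> carrier_vec 2" "vnorm2 v = 1" and x: "x = vnorm2 (E *\<^sub>v v)"
      unfolding Sset_def dc by auto
    have n1: "norm (v $ 0, v $ 1) = 1" using v vnorm2_2 by simp
    have b0: "cmod (v $ 0) \<le> 1" proof -
      have "cmod (v $ 0) \<le> norm (v $ 0, v $ 1)" unfolding norm_Pair by (rule real_sqrt_sum_squares_ge1)
      then show ?thesis using n1 by simp
    qed
    have b1: "cmod (v $ 1) \<le> 1" proof -
      have "cmod (v $ 1) \<le> norm (v $ 0, v $ 1)" unfolding norm_Pair by (rule real_sqrt_sum_squares_ge2)
      then show ?thesis using n1 by simp
    qed
    have Ev: "E *\<^sub>v v \<in> carrier_vec 2" using E v by auto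
    have "x = norm ((E *\<^sub>v v) $ 0, (E *\<^sub>v v) $ 1)" using x vnorm2_2[OF Ev] by simp
    also have "\<dots> \<le> cmod ((E *\<^sub>v v) $ 0) + cmod ((E *\<^sub>v v) $ 1)" by (rule norm_Pair_le)
    also have "\<dots> \<le> K"
    proof -
      have "cmod ((E *\<^sub>v v) $ 0) \<le> cmod (E $$ (0,0)) + cmod (E $$ (0,1))"
      proof -
        have "cmod ((E *\<^sub>v v) $ 0) \<le> cmod (E $$ (0,0) * v $ 0) + cmod (E $$ (0,1) * v $ 1)"
          using mv2[OF E v(1)] norm_triangle_ineq by simp
        also have "\<dots> \<le> cmod (E $$ (0,0)) + cmod (E $$ (0,1))" unfolding norm_mult
          by (intro add_mono mult_right_le_one_le) (use b0 b1 in auto)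
        finally show ?thesis .
      qed
      moreover have "cmod ((E *\<^sub>v v) $ 1) \<le> cmod (E $$ (1,0)) + cmod (E $$ (1,1))"
      proof -
        have "cmod ((E *\<^sub>v v) $ 1) \<le> cmod (E $$ (1,0) * v $ 0) + cmod (E $$ (1,1) * v $ 1)"
          using mv2[OF E v(1)] norm_triangle_ineq by simp
        also have "\<dots> \<le> cmod (E $$ (1,0)) + cmod (E $$ (1,1))" unfolding norm_mult
          by (intro add_mono mult_right_le_one_le) (use b0 b1 in auto)
        finally show ?thesis .
      qed
      ultimately show ?thesis unfolding K_def by simp
    qed
    finally show "x \<le> K" .
  qed
  show ?thesis
  proof (cases "norm (c0, c1) = 0")
    case True
    then have "c0 = 0" "c1 = 0" by (auto simp: zero_prod_def)
    then show ?thesis by simp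
  next
    case False
    define N where "N = norm (c0, c1)"
    have N: "N > 0" using False unfolding N_def by simp
    define v where "v = vec 2 (\<lambda>i. if i = 0 then c0 / of_real N else c1 / of_real N)"
    have v: "v \<in> carrier_vec 2" unfolding v_def by simp
    have v0: "v $ 0 = c0 / of_real N" and v1: "v $ 1 = c1 / of_real N" unfolding v_def by auto
    have pv: "(v $ 0, v $ 1) = (1 / N) *\<^sub>R (c0, c1)" unfolding v0 v1
      by (simp add: scaleR_conv_of_real divide_inverse mult.commute)
    have "vnorm2 v = 1" unfolding vnorm2_2[OF v] pv norm_scaleR N_def[symmetric] using N by simp
    then have mem: "vnorm2 (E *\<^sub>v v) \<in> Sset" unfolding Sset_def dc using v by auto
    have Ev: "E *\<^sub>v v \<in> carrier_vec 2" using E v by auto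
    have pEv: "((E *\<^sub>v v) $ 0, (E *\<^sub>v v) $ 1) = (1 / N) *\<^sub>R
        (E $$ (0,0) * c0 + E $$ (0,1) * c1, E $$ (1,0) * c0 + E $$ (1,1) * c1)"
      using mv2[OF E v] unfolding v0 v1
      by (simp add: scaleR_conv_of_real divide_inverse algebra_simps)
    have "vnorm2 (E *\<^sub>v v) = norm (E $$ (0,0) * c0 + E $$ (0,1) * c1, E $$ (1,0) * c0 + E $$ (1,1) * c1) / N"
      unfolding vnorm2_2[OF Ev] pEv norm_scaleR using N by simp
    moreover have "vnorm2 (E *\<^sub>v v) \<le> spec_norm E" unfolding spec_norm_def
      using cSup_upper[OF mem bdd] unfolding Sset_def .
    ultimately show ?thesis using N unfolding N_def[symmetric] by (simp add: divide_le_eq mult.commute)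
  qed
qed



lemma m0_lower:
  assumes z: "Im z \<noteq> 0" and zb: "cmod z \<le> 10"
  shows "cmod (m0 z) \<ge> 1/11"
proof (rule ccontr)
  assume neg: "\<not> ?thesis"
  have z0: "z \<noteq> 0" using z by auto
  define s where "s = sqrt_branch z"
  have s2: "s^2 = z^2 - 4"
  proof -
    have "s^2 = z^2 * (csqrt (1 - 4 / z\<^sup>2))^2" unfolding s_def sqrt_branch_def by (simp add: power_mult_distrib)
    also have "\<dots> = z^2 * (1 - 4 / z\<^sup>2)" by simp
    also have "\<dots> = z^2 - 4" using z0 by (simp add: field_simps)
    finally show ?thesis .
  qed
  define m where "m = m0 z"
  have "m * (m + z) = (s^2 - z^2) / 4" unfolding m_def m0_def s_def[symmetric]
    by (simp add: field_simps power2_eq_square)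
  then have "m * (m + z) = -1" using s2 by simp
  then have prod: "cmod m * cmod (m + z) = 1" by (metis norm_minus_cancel norm_mult norm_one)
  have "cmod (m + z) \<le> cmod m + cmod z" by (rule norm_triangle_ineq)
  then have "cmod (m + z) < 11" using neg zb unfolding m_def by linarith
  moreover have "cmod m < 1/11" using neg unfolding m_def by simp
  ultimately have "cmod m * cmod (m + z) < 1/11 * 11"
    by (intro mult_strict_mono') auto
  then show False using prod by simp
qed

lemma vnorm_inf_ge: "k < dim_vec y \<Longrightarrow> cmod (y $ k) \<le> vnorm_inf y"
  unfolding vnorm_inf_def by (intro Max_ge) auto

lemma vnorm_inf_nonneg: "0 \<le> vnorm_inf y"
  unfolding vnorm_inf_def by (intro Max_ge) auto

lemma pair_comp_le: "cmod a \<le> norm (a, b)" "cmod b \<le> norm (a, b)"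
  unfolding norm_Pair by (rule real_sqrt_sum_squares_ge1, rule real_sqrt_sum_squares_ge2)



theorem lemma5p2:
  shows "\<exists>C>0. \<forall>(n::nat) (A::real mat) (z::complex) (\<delta>::real).
    n \<ge> 3 \<longrightarrow> A \<in> carrier_mat n n \<longrightarrow> transpose_mat A = A \<longrightarrow>
    Im z \<noteq> 0 \<longrightarrow> cmod z \<le> 10 \<longrightarrow>
    0 \<le> \<delta> \<longrightarrow>
    \<delta> \<le> Inf ((\<lambda>w. cmod (m0 w)) ` {w. w \<notin> complex_of_real ` {-2..2} \<and> cmod w \<le> 10}) / 2 \<longrightarrow>
    spec_norm (block12 (resolvent A z) - m0 z \<cdot>\<^sub>m 1\<^sub>m 2) \<le> \<delta> \<longrightarrow>
    (\<forall>k\<in>{0, 1}.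
       cmod ((resolvent A z *\<^sub>v ones_vec n) $ k
             - m0 z * (1 - row_rest A k \<bullet> (resolvent (minor12 A) z *\<^sub>v ones_vec (n - 2))))
       \<le> C * \<delta> * (1 + vnorm_inf (resolvent A z *\<^sub>v ones_vec n)))"
proof (intro exI[of _ 44] conjI allI impI ballI)
  show "(0::real) < 44" by simp
  fix n :: nat and A :: "real mat" and z :: complex and \<delta> :: real and k :: nat
  assume n: "n \<ge> 3" and A: "A \<in> carrier_mat n n" and sym: "transpose_mat A = A"
    and z: "Im z \<noteq> 0" and zb: "cmod z \<le> 10" and d0: "0 \<le> \<delta>"
    and dinf: "\<delta> \<le> Inf ((\<lambda>w. cmod (m0 w)) ` {w. w \<notin> complex_of_real ` {-2..2} \<and> cmod w \<le> 10}) / 2"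
    and hE: "spec_norm (block12 (resolvent A z) - m0 z \<cdot>\<^sub>m 1\<^sub>m 2) \<le> \<delta>"
    and k: "k \<in> {0, 1}"
  define R where "R = resolvent A z"
  define y where "y = R *\<^sub>v ones_vec n"
  define E where "E = block12 R - m0 z \<cdot>\<^sub>m 1\<^sub>m 2"
  define m where "m = m0 z"
  define u where "u = (\<lambda>i. 1 - row_rest A i \<bullet> (resolvent (minor12 A) z *\<^sub>v ones_vec (n - 2)))"
  have R: "R \<in> carrier_mat n n" unfolding R_def using resolvent_props[OF A sym z] by auto
  have dy: "dim_vec y = n" unfolding y_def using R by simp
  have E: "E \<in> carrier_mat 2 2" unfolding E_def block12_def by auto
  have Eij: "E $$ (i,j) = R $$ (i,j) - (if i = j then m else 0)" if "i < 2" "j < 2" for i j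
    unfolding E_def block12_def m_def using that by auto
  have y0: "y $ 0 = R $$ (0,0) * u 0 + R $$ (0,1) * u 1"
    unfolding y_def R_def u_def by (rule key_identity[OF A sym z n]) simp
  have y1: "y $ 1 = R $$ (1,0) * u 0 + R $$ (1,1) * u 1"
    unfolding y_def R_def u_def by (rule key_identity[OF A sym z n]) simp
  define EU where "EU = (E $$ (0,0) * u 0 + E $$ (0,1) * u 1, E $$ (1,0) * u 0 + E $$ (1,1) * u 1)"
  have EU: "EU = (y $ 0 - m * u 0, y $ 1 - m * u 1)"
    unfolding EU_def y0 y1 by (simp add: Eij algebra_simps)
  define nU where "nU = norm (u 0, u 1)"
  have nU0: "nU \<ge> 0" unfolding nU_def by simp
  have hE': "spec_norm E \<le> \<delta>" using hE unfolding E_def R_def .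
  have EUb: "norm EU \<le> \<delta> * nU"
  proof -
    have "norm EU \<le> spec_norm E * nU" unfolding EU_def nU_def by (rule spec2[OF E])
    also have "\<dots> \<le> \<delta> * nU" using hE' nU0 by (rule mult_right_mono)
    finally show ?thesis .
  qed
  have ma: "cmod m \<ge> 1/11" unfolding m_def by (rule m0_lower[OF z zb])
  have dm: "\<delta> \<le> cmod m / 2"
  proof -
    have mem: "z \<in> {w. w \<notin> complex_of_real ` {-2..2} \<and> cmod w \<le> 10}" using z zb by auto
    have "Inf ((\<lambda>w. cmod (m0 w)) ` {w. w \<notin> complex_of_real ` {-2..2} \<and> cmod w \<le> 10}) \<le> cmod (m0 z)"
      by (rule cInf_lower) (use mem in auto, auto intro: bdd_belowI[of _ 0])
    then show ?thesis using dinf unfolding m_def by simp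
  qed
  define Y where "Y = vnorm_inf y"
  have Y0: "Y \<ge> 0" unfolding Y_def by (rule vnorm_inf_nonneg)
  have yb0: "cmod (y $ 0) \<le> Y" unfolding Y_def using n dy by (intro vnorm_inf_ge) auto
  have yb1: "cmod (y $ 1) \<le> Y" unfolding Y_def using n dy by (intro vnorm_inf_ge) auto
  have P: "norm (y $ 0, y $ 1) \<le> 2 * Y"
    using norm_Pair_le[of "y $ 0" "y $ 1"] yb0 yb1 by simp
  have mU: "cmod m * nU \<le> norm (y $ 0, y $ 1) + \<delta> * nU"
  proof -
    have eq: "(m * u 0, m * u 1) = (y $ 0, y $ 1) - EU" unfolding EU by simp
    have "cmod m * nU = norm (m * u 0, m * u 1)" unfolding nU_def norm_Pair
      by (simp add: norm_mult power_mult_distrib real_sqrt_mult distrib_left[symmetric])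
    also have "\<dots> \<le> norm (y $ 0, y $ 1) + norm EU" unfolding eq by (rule norm_triangle_ineq4)
    finally show ?thesis using EUb by simp
  qed
  have "cmod m * nU \<le> 2 * norm (y $ 0, y $ 1)"
  proof -
    have "\<delta> * nU \<le> cmod m / 2 * nU" using dm nU0 by (rule mult_right_mono)
    then show ?thesis using mU by simp
  qed
  then have "cmod m * nU \<le> 4 * Y" using P by simp
  moreover have "1/11 * nU \<le> cmod m * nU" using ma nU0 by (rule mult_right_mono)
  ultimately have nUb: "nU \<le> 44 * Y" by simp
  have lhs: "cmod (y $ k - m * u k) \<le> norm EU"
    using k pair_comp_le(1)[where a="y $ 0 - m * u 0" and b="y $ 1 - m * u 1"]
      pair_comp_le(2)[where a="y $ 0 - m * u 0" and b="y $ 1 - m * u 1"] unfolding EU by auto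
  have "cmod (y $ k - m * u k) \<le> \<delta> * (44 * Y)"
    using lhs EUb mult_left_mono[OF nUb d0] by linarith
  also have "\<dots> \<le> 44 * \<delta> * (1 + Y)" using d0 Y0 by (simp add: algebra_simps)
  finally show "cmod ((resolvent A z *\<^sub>v ones_vec n) $ k
             - m0 z * (1 - row_rest A k \<bullet> (resolvent (minor12 A) z *\<^sub>v ones_vec (n - 2))))
       \<le> 44 * \<delta> * (1 + vnorm_inf (resolvent A z *\<^sub>v ones_vec n))"
    unfolding y_def R_def m_def u_def Y_def .
qed

end
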